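(* Let $\mathcal{J}$ be a finite set, $\mathcal{J}_0=\mathcal{J}\cup\{0\}$, $(\Omega,P)$ a Borel probability space and $\mathcal{U}:\Omega\times\mathcal{J}_0\times\mathbb{R}\to\mathbb{R}$ satisfying the regularity and no-indifference assumptions in the context. Let $s,s'$ be probability vectors on $\mathcal{J}_0$ with $s\le s'$ (i.e. $s_j\le s'_j$ for all $j\in\mathcal{J}$). If $\delta\in\tilde\sigma^{-1}(s)$ and $\delta'\in\tilde\sigma^{-1}(s')$, then $\delta\wedge\delta'\in\tilde\sigma^{-1}(s)$ and $\delta\vee\delta'\in\tilde\sigma^{-1}(s')$, where $(\delta\wedge\delta')_j=\min\{\delta_j,\delta'_j\}$ and $(\delta\vee\delta')_j=\max\{\delta_j,\delta'_j\}$. That is, $s\mapsto\tilde\sigma^{-1}(s)$ is isotone in Veinott's strong set order.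
   Context: Assumption (regularity): for every $j\in\mathcal{J}_0$ and $\delta\in\mathbb{R}$ the map $\varepsilon\mapsto\mathcal{U}_{\varepsilon j}(\delta)$ is measurable, and for every $\varepsilon$, $j$ the map $\delta\mapsto\mathcal{U}_{\varepsilon j}(\delta)$ is increasing and continuous. Assumption (no indifference): for all distinct $j,j'\in\mathcal{J}_0$ and all $\delta,\delta'\in\mathbb{R}$, $P(\varepsilon:\mathcal{U}_{\varepsilon j}(\delta)=\mathcal{U}_{\varepsilon j'}(\delta'))=0$. For $\delta\in\mathbb{R}^{\mathcal{J}_0}$, $\sigma_j(\delta)=P(\varepsilon:\mathcal{U}_{\varepsilon j}(\delta_j)\ge\max_{j'\in\mathcal{J}_0}\mathcal{U}_{\varepsilon j'}(\delta_{j'}))$. For $\delta\in\mathbb{R}^{\mathcal{J}}$, $\tilde\sigma(\delta)=\sigma((0,\delta))$ (normalization $\delta_0=0$), and $\tilde\sigma^{-1}(s)=\{\delta\in\mathbb{R}^{\mathcal{J}}:\tilde\sigma(\delta)=s\}$. *)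

theory Defs
  imports "HOL-Probability.Probability"
begin

text \<open>Products are indexed by natural numbers; the finite product set is J
  (with 0 not in J) and the outside option is 0, so J0 = insert 0 J.
  U eps j d is the utility of product j at mean utility d in state eps.\<close>

definition choice_prob ::
  "'w measure \<Rightarrow> ('w \<Rightarrow> nat \<Rightarrow> real \<Rightarrow> real) \<Rightarrow> nat set \<Rightarrow> (nat \<Rightarrow> real) \<Rightarrow> nat \<Rightarrow> real"
  where "choice_prob M U J0 \<delta> j =
    measure M {\<epsilon> \<in> space M. U \<epsilon> j (\<delta> j) \<ge> Max ((\<lambda>j'. U \<epsilon> j' (\<delta> j')) ` J0)}"

definition choice_prob_tilde ::
  "'w measure \<Rightarrow> ('w \<Rightarrow> nat \<Rightarrow> real \<Rightarrow> real) \<Rightarrow> nat set \<Rightarrow> (nat \<Rightarrow> real) \<Rightarrow> nat \<Rightarrow> real"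
  where "choice_prob_tilde M U J \<delta> = choice_prob M U (insert 0 J) (\<delta>(0 := 0))"

definition choice_prob_tilde_inv ::
  "'w measure \<Rightarrow> ('w \<Rightarrow> nat \<Rightarrow> real \<Rightarrow> real) \<Rightarrow> nat set \<Rightarrow> (nat \<Rightarrow> real) \<Rightarrow> (nat \<Rightarrow> real) set"
  where "choice_prob_tilde_inv M U J s =
    {\<delta> \<in> J \<rightarrow>\<^sub>E (UNIV :: real set). \<forall>j \<in> insert 0 J. choice_prob_tilde M U J \<delta> j = s j}"

end

theory Submission
  imports Defs
begin

lemma E_alt:
  assumes "finite J0" "J0 \<noteq> {}"
  shows "{\<epsilon> \<in> space M. U \<epsilon> j (x j) \<ge> Max ((\<lambda>j'. U \<epsilon> j' (x j')) ` J0)}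
       = {\<epsilon> \<in> space M. \<forall>k\<in>J0. U \<epsilon> k (x k) \<le> U \<epsilon> j (x j)}"
  using assms by (auto simp: Max_le_iff)

lemma E_sets:
  fixes U :: "'w \<Rightarrow> nat \<Rightarrow> real \<Rightarrow> real"
  assumes "finite J0" "j \<in> J0"
    and meas: "\<And>j d. j \<in> J0 \<Longrightarrow> (\<lambda>\<epsilon>. U \<epsilon> j d) \<in> borel_measurable M"
  shows "{\<epsilon> \<in> space M. \<forall>k\<in>J0. U \<epsilon> k (x k) \<le> U \<epsilon> j (x j)} \<in> sets M"
proof (rule sets.sets_Collect_finite_All[OF _ assms(1)])
  fix k assume k: "k \<in> J0"
  show "{\<epsilon> \<in> space M. U \<epsilon> k (x k) \<le> U \<epsilon> j (x j)} \<in> sets M"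
    by (rule borel_measurable_le[of "\<lambda>\<epsilon>. U \<epsilon> k (x k)" M "\<lambda>\<epsilon>. U \<epsilon> j (x j)"])
       (use meas k assms(2) in auto)
qed

lemma sum_one:
  fixes U :: "'w \<Rightarrow> nat \<Rightarrow> real \<Rightarrow> real"
  assumes prob: "prob_space M" and fin: "finite J0" and ne: "J0 \<noteq> {}"
    and meas: "\<And>j d. j \<in> J0 \<Longrightarrow> (\<lambda>\<epsilon>. U \<epsilon> j d) \<in> borel_measurable M"
    and no_indiff: "\<And>j j' d d'. j \<in> J0 \<Longrightarrow> j' \<in> J0 \<Longrightarrow> j \<noteq> j' \<Longrightarrow>
        measure M {\<epsilon> \<in> space M. U \<epsilon> j d = U \<epsilon> j' d'} = 0"
  shows "(\<Sum>j\<in>J0. choice_prob M U J0 x j) = 1"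
proof -
  interpret P: prob_space M by (rule prob)
  define E where "E j = {\<epsilon> \<in> space M. \<forall>k\<in>J0. U \<epsilon> k (x k) \<le> U \<epsilon> j (x j)}" for j
  have cp: "choice_prob M U J0 x j = measure M (E j)" for j
    unfolding choice_prob_def E_def by (simp only: E_alt[OF fin ne])
  have Es: "E j \<in> sets M" if "j \<in> J0" for j
    unfolding E_def by (rule E_sets[OF fin that]) (rule meas)
  define T where "T p = {\<epsilon> \<in> space M. U \<epsilon> (fst p) (x (fst p)) = U \<epsilon> (snd p) (x (snd p))}" for p
  define N where "N = (\<Union>p\<in>{p \<in> J0 \<times> J0. fst p \<noteq> snd p}. T p)"
  have Tnull: "T p \<in> null_sets M" if "p \<in> {p \<in> J0 \<times> J0. fst p \<noteq> snd p}" for p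
  proof -
    have "T p \<in> sets M" unfolding T_def
      by (rule borel_measurable_eq[of "\<lambda>\<epsilon>. U \<epsilon> (fst p) (x (fst p))" M "\<lambda>\<epsilon>. U \<epsilon> (snd p) (x (snd p))"])
         (use meas that in auto)
    moreover have "measure M (T p) = 0" unfolding T_def using no_indiff that by auto
    ultimately show ?thesis by (simp add: P.emeasure_eq_measure null_setsI)
  qed
  have Nnull: "N \<in> null_sets M" unfolding N_def
    apply (rule null_sets_UN') using fin Tnull by (auto intro: countable_finite)
  have "(\<Sum>j\<in>J0. measure M (E j)) = (\<Sum>j\<in>J0. measure M (E j - N))"
    using measure_Diff_null_set[OF Es Nnull] by simp
  also have "\<dots> = measure M (\<Union>j\<in>J0. E j - N)"
  proof (rule measure_finite_Union[symmetric, OF fin])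
    show "(\<lambda>j. E j - N) ` J0 \<subseteq> sets M" using Es Nnull by auto
    show "disjoint_family_on (\<lambda>j. E j - N) J0"
      unfolding disjoint_family_on_def
    proof (intro ballI impI)
      fix i j assume ij: "i \<in> J0" "j \<in> J0" "i \<noteq> j"
      show "(E i - N) \<inter> (E j - N) = {}"
      proof (rule ccontr)
        assume "(E i - N) \<inter> (E j - N) \<noteq> {}"
        then obtain e where e: "e \<in> E i" "e \<in> E j" "e \<notin> N" by blast
        then have "e \<in> T (i, j)" using ij unfolding E_def T_def by (auto intro: antisym)
        then have "e \<in> N" using ij unfolding N_def by auto
        with e show False by blast
      qed
    qed
    show "emeasure M (E i - N) \<noteq> \<infinity>" for i by simp
  qed
  also have "\<dots> \<le> 1" by (rule P.prob_le_1)
  finally have le: "(\<Sum>j\<in>J0. measure M (E j)) \<le> 1" .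
  have "space M \<subseteq> (\<Union>j\<in>J0. E j)"
  proof
    fix e assume e: "e \<in> space M"
    have "Max ((\<lambda>j'. U e j' (x j')) ` J0) \<in> (\<lambda>j'. U e j' (x j')) ` J0"
      using fin ne by (intro Max_in) auto
    then obtain j where j: "j \<in> J0" "U e j (x j) = Max ((\<lambda>j'. U e j' (x j')) ` J0)" by auto
    then have "e \<in> E j" unfolding E_def using e fin by auto
    with j show "e \<in> (\<Union>j\<in>J0. E j)" by auto
  qed
  then have "1 \<le> measure M (\<Union>j\<in>J0. E j)"
  proof -
    have Us: "(\<Union>j\<in>J0. E j) \<in> sets M" using Es fin by auto
    show ?thesis using P.finite_measure_mono[OF \<open>space M \<subseteq> _\<close> Us] P.prob_space by simp
  qed
  also have "\<dots> \<le> (\<Sum>j\<in>J0. measure M (E j))"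
    by (rule P.finite_measure_subadditive_finite[OF fin]) (use Es in auto)
  finally show ?thesis using le cp by simp
qed

lemma cp_mono:
  fixes U :: "'w \<Rightarrow> nat \<Rightarrow> real \<Rightarrow> real"
  assumes prob: "prob_space M" and fin: "finite K" and ne: "K \<noteq> {}" and j: "j \<in> K"
    and meas: "\<And>j d. j \<in> K \<Longrightarrow> (\<lambda>\<epsilon>. U \<epsilon> j d) \<in> borel_measurable M"
    and incr: "\<And>\<epsilon> j. j \<in> K \<Longrightarrow> mono (U \<epsilon> j)"
    and eqj: "x j = y j" and le: "\<And>k. k \<in> K \<Longrightarrow> x k \<le> y k"
  shows "choice_prob M U K y j \<le> choice_prob M U K x j"
proof -
  interpret P: prob_space M by (rule prob)
  have sub: "{\<epsilon> \<in> space M. \<forall>k\<in>K. U \<epsilon> k (y k) \<le> U \<epsilon> j (y j)}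
     \<subseteq> {\<epsilon> \<in> space M. \<forall>k\<in>K. U \<epsilon> k (x k) \<le> U \<epsilon> j (x j)}"
  proof safe
    fix e k assume "\<forall>k\<in>K. U e k (y k) \<le> U e j (y j)" "k \<in> K"
    moreover have "U e k (x k) \<le> U e k (y k)" using incr[OF \<open>k \<in> K\<close>] le[OF \<open>k \<in> K\<close>] by (rule monoD)
    ultimately show "U e k (x k) \<le> U e j (x j)" using eqj by force
  qed
  show ?thesis unfolding choice_prob_def
    by (simp only: E_alt[OF fin ne]) (rule P.finite_measure_mono[OF sub E_sets[of K j U M x, OF fin j meas]])
qed

theorem theorem2:
  fixes M :: "'w::topological_space measure"
    and U :: "'w \<Rightarrow> nat \<Rightarrow> real \<Rightarrow> real"
    and J :: "nat set"
    and s s' \<delta> \<delta>' :: "nat \<Rightarrow> real"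
  assumes finJ: "finite J" and zero_notin: "0 \<notin> J"
    and prob: "prob_space M" and borel_M: "sets M = sets borel"
    and meas: "\<And>j d. j \<in> insert 0 J \<Longrightarrow> (\<lambda>\<epsilon>. U \<epsilon> j d) \<in> borel_measurable M"
    and incr: "\<And>\<epsilon> j. j \<in> insert 0 J \<Longrightarrow> mono (U \<epsilon> j)"
    and cont: "\<And>\<epsilon> j. j \<in> insert 0 J \<Longrightarrow> continuous_on UNIV (U \<epsilon> j)"
    and no_indiff: "\<And>j j' d d'. j \<in> insert 0 J \<Longrightarrow> j' \<in> insert 0 J \<Longrightarrow> j \<noteq> j' \<Longrightarrow>
        measure M {\<epsilon> \<in> space M. U \<epsilon> j d = U \<epsilon> j' d'} = 0"
    and s_nonneg: "\<And>j. j \<in> insert 0 J \<Longrightarrow> s j \<ge> 0"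
    and s_sum: "(\<Sum>j \<in> insert 0 J. s j) = 1"
    and s'_nonneg: "\<And>j. j \<in> insert 0 J \<Longrightarrow> s' j \<ge> 0"
    and s'_sum: "(\<Sum>j \<in> insert 0 J. s' j) = 1"
    and s_le: "\<And>j. j \<in> J \<Longrightarrow> s j \<le> s' j"
    and \<delta>_in: "\<delta> \<in> choice_prob_tilde_inv M U J s"
    and \<delta>'_in: "\<delta>' \<in> choice_prob_tilde_inv M U J s'"
  shows "(\<lambda>j. min (\<delta> j) (\<delta>' j)) \<in> choice_prob_tilde_inv M U J s
       \<and> (\<lambda>j. max (\<delta> j) (\<delta>' j)) \<in> choice_prob_tilde_inv M U J s'"
proof -
  let ?J0 = "insert 0 J"
  have fin: "finite ?J0" and ne: "?J0 \<noteq> {}" using finJ by auto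
  define d where "d = \<delta>(0 := 0)"
  define d' where "d' = \<delta>'(0 := 0)"
  define mn where "mn = (\<lambda>j. min (d j) (d' j))"
  define mx where "mx = (\<lambda>j. max (d j) (d' j))"
  have mn_eq: "(\<lambda>j. min (\<delta> j) (\<delta>' j))(0 := 0) = mn" unfolding mn_def d_def d'_def by auto
  have mx_eq: "(\<lambda>j. max (\<delta> j) (\<delta>' j))(0 := 0) = mx" unfolding mx_def d_def d'_def by auto
  have sd: "choice_prob M U ?J0 d j = s j" if "j \<in> ?J0" for j
    using \<delta>_in that unfolding choice_prob_tilde_inv_def choice_prob_tilde_def d_def by auto
  have sd': "choice_prob M U ?J0 d' j = s' j" if "j \<in> ?J0" for j
    using \<delta>'_in that unfolding choice_prob_tilde_inv_def choice_prob_tilde_def d'_def by auto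
  have sum1: "(\<Sum>j\<in>?J0. choice_prob M U ?J0 x j) = 1" for x
    by (rule sum_one[OF prob fin ne meas no_indiff])
  have ext: "(\<lambda>j. f (\<delta> j) (\<delta>' j)) \<in> J \<rightarrow>\<^sub>E (UNIV :: real set)" if "\<And>a. f a a = a" for f :: "real \<Rightarrow> real \<Rightarrow> real"
    using \<delta>_in \<delta>'_in that unfolding choice_prob_tilde_inv_def by (auto simp: PiE_iff extensional_def)
  have eq_from_le: "\<forall>j\<in>?J0. g j = t j"
    if "\<And>j. j \<in> ?J0 \<Longrightarrow> t j \<le> g j" "(\<Sum>j\<in>?J0. g j) = 1" "(\<Sum>j\<in>?J0. t j) = 1"
    for g t :: "nat \<Rightarrow> real"
  proof -
    have "(\<Sum>j\<in>?J0. g j - t j) = 0" using that by (simp add: sum_subtractf)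
    then have "\<forall>j\<in>?J0. g j - t j = 0" using that(1) fin by (subst (asm) sum_nonneg_eq_0_iff) auto
    then show ?thesis by auto
  qed
  have I1: "mn j = d' j \<and> d j = mx j" if "j \<in> J" "d' j < d j" for j
    using that unfolding mn_def mx_def by auto
  have I2: "mn j = d j \<and> d' j = mx j" if "j \<in> ?J0" "\<not> (j \<in> J \<and> d' j < d j)" for j
    using that zero_notin unfolding mn_def mx_def d_def d'_def by (cases "j = 0") auto
  have "\<forall>j\<in>?J0. choice_prob M U ?J0 mn j = s j"
  proof (rule eq_from_le[OF _ sum1 s_sum])
    fix j assume j: "j \<in> ?J0"
    show "s j \<le> choice_prob M U ?J0 mn j"
    proof (cases "j \<in> J \<and> d' j < d j")
      case True
      have "s' j \<le> choice_prob M U ?J0 mn j"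
        using cp_mono[where U=U and M=M and K="?J0" and j=j and x=mn and y="d'", OF prob fin ne j meas incr] I1 True sd' j unfolding mn_def by auto
      then show ?thesis using s_le True by force
    next
      case False
      show ?thesis
        using cp_mono[where U=U and M=M and K="?J0" and j=j and x=mn and y=d, OF prob fin ne j meas incr] I2[OF j False] sd j unfolding mn_def by auto
    qed
  qed
  moreover have "\<forall>j\<in>?J0. s' j = choice_prob M U ?J0 mx j"
  proof (rule eq_from_le[OF _ s'_sum sum1])
    fix j assume j: "j \<in> ?J0"
    show "choice_prob M U ?J0 mx j \<le> s' j"
    proof (cases "j \<in> J \<and> d' j < d j")
      case True
      have "choice_prob M U ?J0 mx j \<le> s j"
        using cp_mono[where U=U and M=M and K="?J0" and j=j and x=d and y=mx, OF prob fin ne j meas incr] I1 True sd j unfolding mx_def by auto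
      then show ?thesis using s_le True by force
    next
      case False
      show ?thesis
        using cp_mono[where U=U and M=M and K="?J0" and j=j and x="d'" and y=mx, OF prob fin ne j meas incr] I2[OF j False] sd' j unfolding mx_def by auto
    qed
  qed
  ultimately show ?thesis
    unfolding choice_prob_tilde_inv_def choice_prob_tilde_def
    using ext[of min] ext[of max] by (simp add: mn_eq mx_eq)
qed

end
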